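(* For every environment $\omega$, $n=l+m$, $x=-l+m$ with $l,m\ge0$, $$P^{\omega}_n(X_n=x)=P^{\mathbf 0}_n(X_n=x)+\tfrac12\{p^{(H)}_n(l,m)^2-q^{(H)}_n(l,m)^2\}\sin(\omega_0),$$ where $P^{\mathbf 0}_n$ denotes the quenched law for the environment $\omega\equiv0$.
   Context: $U_x=\frac{1}{\sqrt2}\begin{pmatrix} e^{i\omega_x} & 1\\ 1 & -e^{-i\omega_x}\end{pmatrix}=\begin{pmatrix} a_x & b_x\\ c_x & d_x\end{pmatrix}$ ($\omega_x\in\mathbb R$), $P_x=\begin{pmatrix} a_x & b_x\\ 0&0\end{pmatrix}$, $Q_x=\begin{pmatrix} 0&0\\ c_x & d_x\end{pmatrix}$. $\Xi_0(0,0)=I$, $\Xi_n(l,m)=0$ if $l<0$ or $m<0$, and $\Xi_{n+1}(l,m)=P_{x+1}\Xi_n(l-1,m)+Q_{x-1}\Xi_n(l,m-1)$ for $l,m\ge0$, $l+m=n+1$, $x=-l+m$. With $\varphi_*={}^T[1/\sqrt2,i/\sqrt2]$, $P^{\omega}_n(X_n=x)=\|\Xi_n(l,m)\varphi_*\|^2$. Here, for $\min\{l,m\}\ge1$, $p^{(H)}_n(l,m)=(1/\sqrt2)^{n-1}\sum_{\gamma=1}^{(l-1)\wedge m}(-1)^{m-\gamma}\binom{l-1}{\gamma}\binom{m-1}{\gamma-1}$ and $q^{(H)}_n(l,m)=(1/\sqrt2)^{n-1}\sum_{\gamma=1}^{l\wedge(m-1)}(-1)^{m-\gamma-1}\binom{l-1}{\gamma-1}\binom{m-1}{\gamma}$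 (empty sums are $0$); $p^{(H)}_n(0,n)=0$, $q^{(H)}_n(0,n)=(-1/\sqrt2)^{n-1}$, $p^{(H)}_n(n,0)=(1/\sqrt2)^{n-1}$, $q^{(H)}_n(n,0)=0$ for $n\ge1$, and $p^{(H)}_0(0,0)=q^{(H)}_0(0,0)=0$. *)

theory Defs
  imports "HOL-Analysis.Analysis"
begin

type_synonym cmat2 = "complex ^ 2 ^ 2"

definition coin_a :: "(int \<Rightarrow> real) \<Rightarrow> int \<Rightarrow> complex" where
  "coin_a \<omega> x = exp (\<i> * complex_of_real (\<omega> x)) / complex_of_real (sqrt 2)"
definition coin_b :: "(int \<Rightarrow> real) \<Rightarrow> int \<Rightarrow> complex" where
  "coin_b \<omega> x = 1 / complex_of_real (sqrt 2)"
definition coin_c :: "(int \<Rightarrow> real) \<Rightarrow> int \<Rightarrow> complex" where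
  "coin_c \<omega> x = 1 / complex_of_real (sqrt 2)"
definition coin_d :: "(int \<Rightarrow> real) \<Rightarrow> int \<Rightarrow> complex" where
  "coin_d \<omega> x = - exp (- \<i> * complex_of_real (\<omega> x)) / complex_of_real (sqrt 2)"

definition coinU :: "(int \<Rightarrow> real) \<Rightarrow> int \<Rightarrow> cmat2" where
  "coinU \<omega> x = (\<chi> i j. if i = 1 then (if j = 1 then coin_a \<omega> x else coin_b \<omega> x)
                           else (if j = 1 then coin_c \<omega> x else coin_d \<omega> x))"

definition matP :: "(int \<Rightarrow> real) \<Rightarrow> int \<Rightarrow> cmat2" where
  "matP \<omega> x = (\<chi> i j. if i = 1 then coinU \<omega> x $ i $ j else 0)"

definition matQ :: "(int \<Rightarrow> real) \<Rightarrow> int \<Rightarrow> cmat2" where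
  "matQ \<omega> x = (\<chi> i j. if i = 2 then coinU \<omega> x $ i $ j else 0)"

fun Xi :: "(int \<Rightarrow> real) \<Rightarrow> nat \<Rightarrow> int \<Rightarrow> int \<Rightarrow> cmat2" where
  "Xi \<omega> 0 l m = (if l = 0 \<and> m = 0 then mat 1 else 0)"
| "Xi \<omega> (Suc n) l m =
     (if l < 0 \<or> m < 0 then 0
      else matP \<omega> (- l + m + 1) ** Xi \<omega> n (l - 1) m
         + matQ \<omega> (- l + m - 1) ** Xi \<omega> n l (m - 1))"

definition phi0 :: "complex ^ 2" where
  "phi0 = (\<chi> i. if i = 1 then 1 / complex_of_real (sqrt 2) else \<i> / complex_of_real (sqrt 2))"

(* quenched probability P^omega_n(X_n = x) = || Xi_n(l,m) phi ||^2 with n = l+m, x = -l+m;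
   zero when n + x is odd (position unreachable) *)
definition qprob :: "(int \<Rightarrow> real) \<Rightarrow> nat \<Rightarrow> int \<Rightarrow> real" where
  "qprob \<omega> n x = (if even (int n + x)
      then (norm (Xi \<omega> n ((int n - x) div 2) ((int n + x) div 2) *v phi0))^2 else 0)"

definition pH :: "nat \<Rightarrow> nat \<Rightarrow> nat \<Rightarrow> real" where
  "pH n l m =
    (if 1 \<le> l \<and> 1 \<le> m then
       (1 / sqrt 2) ^ (n - 1) *
       (\<Sum>\<gamma> = 1..min (l - 1) m. (-1) ^ (m - \<gamma>) * real ((l - 1) choose \<gamma>) * real ((m - 1) choose (\<gamma> - 1)))
     else if l = 0 \<and> m = n \<and> 1 \<le> n then 0
     else if l = n \<and> m = 0 \<and> 1 \<le> n then (1 / sqrt 2) ^ (n - 1)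
     else 0)"

definition qH :: "nat \<Rightarrow> nat \<Rightarrow> nat \<Rightarrow> real" where
  "qH n l m =
    (if 1 \<le> l \<and> 1 \<le> m then
       (1 / sqrt 2) ^ (n - 1) *
       (\<Sum>\<gamma> = 1..min l (m - 1). (-1) ^ (m - \<gamma> - 1) * real ((l - 1) choose (\<gamma> - 1)) * real ((m - 1) choose \<gamma>))
     else if l = 0 \<and> m = n \<and> 1 \<le> n then (- 1 / sqrt 2) ^ (n - 1)
     else if l = n \<and> m = 0 \<and> 1 \<le> n then 0
     else 0)"

end

theory Submission
  imports Defs
begin

definition M2 :: "complex \<Rightarrow> complex \<Rightarrow> complex \<Rightarrow> complex \<Rightarrow> cmat2" where
  "M2 a b c d = (\<chi> i j. if i = 1 then (if j = 1 then a else b) else (if j = 1 then c else d))"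

lemma one_neq_two2: "(1::2) \<noteq> 2" by simp

lemma M2_eta: "X = M2 (X$1$1) (X$1$2) (X$2$1) (X$2$2)"
  unfolding M2_def vec_eq_iff forall_2 by simp

lemma M2_mult: "M2 a b c d ** M2 a' b' c' d' = M2 (a*a'+b*c') (a*b'+b*d') (c*a'+d*c') (c*b'+d*d')"
  unfolding M2_def matrix_matrix_mult_def vec_eq_iff forall_2 by (simp add: sum_2)

lemma M2_add: "M2 a b c d + M2 a' b' c' d' = M2 (a+a') (b+b') (c+c') (d+d')"
  unfolding M2_def vec_eq_iff forall_2 by simp

lemma M2_zero: "(0::cmat2) = M2 0 0 0 0"
  unfolding M2_def vec_eq_iff forall_2 by simp

lemma M2_one: "(mat 1::cmat2) = M2 1 0 0 1"
  unfolding M2_def mat_def vec_eq_iff forall_2 by simp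

lemma M2_mulv: "M2 a b c d *v v = (\<chi> i. if i = 1 then a * v$1 + b * v$2 else c * v$1 + d * v$2)"
  unfolding M2_def matrix_vector_mult_def vec_eq_iff forall_2 by (simp add: sum_2)

lemma norm2_vec2: "(norm (v::complex^2))^2 = (cmod (v$1))^2 + (cmod (v$2))^2"
  unfolding norm_vec_def L2_set_def by (simp add: sum_2)

lemma matP_M2: "matP \<omega> x = M2 (cis (\<omega> x) / sqrt 2) (1 / sqrt 2) 0 0"
  unfolding matP_def coinU_def M2_def coin_a_def coin_b_def vec_eq_iff forall_2
  by (simp add: cis_conv_exp mult.commute)

lemma matQ_M2: "matQ \<omega> x = M2 0 0 (1 / sqrt 2) (- cis (- \<omega> x) / sqrt 2)"
  unfolding matQ_def coinU_def M2_def coin_c_def coin_d_def vec_eq_iff forall_2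
  by (simp add: cis_conv_exp mult.commute)


definition Hs :: "(int \<Rightarrow> real) \<Rightarrow> int \<Rightarrow> real" where
  "Hs \<omega> x = (if x \<ge> 0 then (\<Sum>k<nat x. \<omega> (int k)) else - (\<Sum>k\<in>{1..nat (-x)}. \<omega> (- int k)))"

lemma Hs0: "Hs \<omega> 0 = 0" by (simp add: Hs_def)

lemma Hs_succ: "Hs \<omega> (x+1) = Hs \<omega> x + \<omega> x"
proof (cases "x \<ge> 0")
  case True
  then have "nat (x+1) = Suc (nat x)" by simp
  then show ?thesis using True by (simp add: Hs_def)
next
  case False
  show ?thesis
  proof (cases "x = -1")
    case True then show ?thesis by (simp add: Hs_def)
  next
    case F2: False
    define j where "j = nat (-x) - 1"
    have j: "nat (-x) = Suc j" "j \<ge> 1" using False F2 unfolding j_def by auto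
    have j2: "nat (-(x+1)) = j" using j by simp
    have "x = - int (Suc j)" using j False by simp
    then show ?thesis using False F2 j j2 by (simp add: Hs_def)
  qed
qed

definition D1 :: "(int \<Rightarrow> real) \<Rightarrow> int \<Rightarrow> cmat2" where
  "D1 \<omega> x = M2 (cis (- Hs \<omega> x - \<omega> x)) 0 0 (cis (- Hs \<omega> x))"

definition D2 :: "(int \<Rightarrow> real) \<Rightarrow> cmat2" where
  "D2 \<omega> = M2 (cis (\<omega> 0)) 0 0 1"

lemma mat_rdistrib: "((A::cmat2) + B) ** C = A ** C + B ** C"
  by (vector matrix_matrix_mult_def sum.distrib[symmetric] field_simps)

lemma keyP: "matP \<omega> (x+1) ** D1 \<omega> (x+1) = D1 \<omega> x ** matP (\<lambda>_. 0) y"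
proof -
  have c: "cis (- \<omega> x - Hs \<omega> x) = cis (- Hs \<omega> x - \<omega> x)" by (rule arg_cong[where f=cis]) simp
  show ?thesis
  unfolding matP_M2 D1_def M2_mult Hs_succ
  by (simp add: cis_mult algebra_simps c)
qed

lemma keyQ: "matQ \<omega> (x-1) ** D1 \<omega> (x-1) = D1 \<omega> x ** matQ (\<lambda>_. 0) y"
proof -
  have c: "cis (- Hs \<omega> (x-1) - \<omega> (x-1)) = cis (- \<omega> (x-1) - Hs \<omega> (x-1))" by (rule arg_cong[where f=cis]) simp
  have h: "Hs \<omega> x = Hs \<omega> (x-1) + \<omega> (x-1)" using Hs_succ[of \<omega> "x-1"] by simp
  show ?thesis
  unfolding matQ_M2 D1_def M2_mult h
  by (simp add: cis_mult algebra_simps c)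
qed

lemma Xi_neg: "l < 0 \<or> m < 0 \<Longrightarrow> Xi \<omega> n l m = 0"
  by (cases n) auto

lemma gauge: "Xi \<omega> n l m = D1 \<omega> (-l+m) ** Xi (\<lambda>_. 0) n l m ** D2 \<omega>"
proof (induction n arbitrary: l m)
  case 0
  show ?case
  proof (cases "l = 0 \<and> m = 0")
    case True
    then show ?thesis unfolding D1_def D2_def by (simp add: M2_one M2_mult Hs0 cis_mult)
  next
    case False
    then have "\<not> (l = 0 \<and> m = 0)" .
    then show ?thesis by (simp only: Xi.simps if_False) simp
  qed
next
  case (Suc n)
  show ?case
  proof (cases "l < 0 \<or> m < 0")
    case True then show ?thesis by simp
  next
    case False
    have e1: "- (l - 1) + m = (-l+m) + 1" by simp
    have e2: "- l + (m - 1) = (-l+m) - 1" by simp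
    have "Xi \<omega> (Suc n) l m = matP \<omega> (- l + m + 1) ** Xi \<omega> n (l - 1) m
         + matQ \<omega> (- l + m - 1) ** Xi \<omega> n l (m - 1)" using False by simp
    also have "\<dots> = (matP \<omega> (- l + m + 1) ** D1 \<omega> (- l + m + 1)) ** Xi (\<lambda>_. 0) n (l-1) m ** D2 \<omega>
         + (matQ \<omega> (- l + m - 1) ** D1 \<omega> (- l + m - 1)) ** Xi (\<lambda>_. 0) n l (m-1) ** D2 \<omega>"
      unfolding Suc.IH e1 e2 by (simp add: matrix_mul_assoc)
    also have "\<dots> = D1 \<omega> (-l+m) ** (matP (\<lambda>_. 0) (- l + m + 1) ** Xi (\<lambda>_. 0) n (l-1) m
         + matQ (\<lambda>_. 0) (- l + m - 1) ** Xi (\<lambda>_. 0) n l (m-1)) ** D2 \<omega>"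
      unfolding keyP[where y="-l+m+1"] keyQ[where y="-l+m-1"] by (simp add: matrix_mul_assoc matrix_add_ldistrib mat_rdistrib)
    also have "\<dots> = D1 \<omega> (-l+m) ** Xi (\<lambda>_. 0) (Suc n) l m ** D2 \<omega>" using False by simp
    finally show ?thesis .
  qed
qed


definition fp :: "nat \<Rightarrow> nat \<Rightarrow> int" where
  "fp L M = (\<Sum>k\<le>L. (-1)^(M+k) * int (L choose (k+1)) * int (M choose k))"
definition fq :: "nat \<Rightarrow> nat \<Rightarrow> int" where
  "fq L M = (\<Sum>k\<le>L. (-1)^(M+k+1) * int (L choose k) * int (M choose (k+1)))"
definition fr :: "nat \<Rightarrow> nat \<Rightarrow> int" where
  "fr L M = (\<Sum>k\<le>L. (-1)^(M+k) * int (L choose k) * int (M choose k))"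

lemma I1: "fp (Suc L) M = fp L M + fr L M"
proof -
  have z: "(L choose Suc L) = 0" "L choose Suc (Suc L) = 0" by simp_all
  have "fp (Suc L) M = (\<Sum>k\<le>Suc L. (-1)^(M+k) * int (L choose (k+1)) * int (M choose k))
      + (\<Sum>k\<le>Suc L. (-1)^(M+k) * int (L choose k) * int (M choose k))"
    unfolding fp_def by (simp add: z sum.distrib[symmetric] algebra_simps)
  also have "\<dots> = fp L M + fr L M"
    unfolding fp_def fr_def by (simp add: z)
  finally show ?thesis .
qed

lemma I1b: "fp 0 M = 0" unfolding fp_def by simp

lemma ext_top: "g (Suc L) = 0 \<Longrightarrow> (\<Sum>k\<le>L. g k) = g 0 + (\<Sum>k\<le>L. g (Suc k))"
proof -
  assume "g (Suc L) = 0"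
  then have "(\<Sum>k\<le>L. g k) = (\<Sum>k\<le>Suc L. g k)" by simp
  also have "\<dots> = g 0 + (\<Sum>k\<le>L. g (Suc k))" by (rule sum.atMost_Suc_shift)
  finally show ?thesis .
qed

lemma fr_shift: "fr L M = (-1)^M + (\<Sum>k\<le>L. (-1)^(M+k+1) * int (L choose (k+1)) * int (M choose (k+1)))"
  unfolding fr_def by (subst ext_top) simp_all

lemma I3: "fr (Suc L) M = fq L M + fr L M"
proof -
  have "fr (Suc L) M = (-1)^M + (\<Sum>k\<le>L. (-1)^(M+k+1) * int (Suc L choose (k+1)) * int (M choose (k+1)))"
    unfolding fr_def by (subst sum.atMost_Suc_shift) simp
  also have "\<dots> = (-1)^M + (\<Sum>k\<le>L. (-1)^(M+k+1) * int (L choose (k+1)) * int (M choose (k+1)))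
       + (\<Sum>k\<le>L. (-1)^(M+k+1) * int (L choose k) * int (M choose (k+1)))"
    by (simp add: sum.distrib[symmetric] algebra_simps)
  also have "\<dots> = fq L M + fr L M" unfolding fr_shift fq_def by simp
  finally show ?thesis .
qed

lemma I3b: "fr 0 M = (-1)^M" unfolding fr_def by simp

lemma I2: "fq L (Suc M) = fr L M - fq L M"
  unfolding fq_def fr_def
  by (simp add: sum.distrib[symmetric] sum_subtractf[symmetric] algebra_simps)

lemma I2b: "fq L 0 = 0" unfolding fq_def by simp

lemma binSucL: "Suc M choose k = (if k = 0 then 0 else M choose (k - 1)) + (M choose k)"
  by (cases k) simp_all

lemma I4: "fr L (Suc M) = fp L M - fr L M"
proof -
  have "fr L (Suc M) = (\<Sum>k\<le>L. (-1)^(M+k+1) * int (L choose k) * int (if k = 0 then 0 else M choose (k - 1)))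
     - fr L M"
    unfolding fr_def
    by (simp add: binSucL sum.distrib[symmetric] sum_subtractf[symmetric] algebra_simps) (rule sum.cong[OF refl], linarith)
  also have "(\<Sum>k\<le>L. (-1)^(M+k+1) * int (L choose k) * int (if k = 0 then 0 else M choose (k - 1)))
      = fp L M" unfolding fp_def by (subst ext_top) simp_all
  finally show ?thesis .
qed

lemma I4b: "fr L 0 = 1" unfolding fr_def by (subst ext_top) simp_all


definition gp :: "nat \<Rightarrow> nat \<Rightarrow> int" where
  "gp l m = (if 1 \<le> l \<and> 1 \<le> m then fp (l-1) (m-1) else if m = 0 \<and> 1 \<le> l then 1 else 0)"
definition gq :: "nat \<Rightarrow> nat \<Rightarrow> int" where
  "gq l m = (if 1 \<le> l \<and> 1 \<le> m then fq (l-1) (m-1) else if l = 0 \<and> 1 \<le> m then (-1)^(m-1) else 0)"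
definition gr :: "nat \<Rightarrow> nat \<Rightarrow> int" where
  "gr l m = (if 1 \<le> l \<and> 1 \<le> m then fr (l-1) (m-1) else 0)"

lemma G1: "1 \<le> l \<Longrightarrow> 1 \<le> m \<Longrightarrow> gp l m = gp (l-1) m + gr (l-1) m"
  by (cases l; cases m; cases "l - 1") (auto simp: gp_def gr_def I1 I1b)

lemma G3: "1 \<le> l \<Longrightarrow> 1 \<le> m \<Longrightarrow> gr l m = gq (l-1) m + gr (l-1) m"
  by (cases l; cases m; cases "l - 1") (auto simp: gq_def gr_def I3 I3b)

lemma G2: "1 \<le> l \<Longrightarrow> 1 \<le> m \<Longrightarrow> gq l m = gr l (m-1) - gq l (m-1)"
  by (cases l; cases m; cases "m - 1") (auto simp: gq_def gr_def I2 I2b)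

lemma G4: "1 \<le> l \<Longrightarrow> 1 \<le> m \<Longrightarrow> gr l m = gp l (m-1) - gr l (m-1)"
  by (cases l; cases m; cases "m - 1") (auto simp: gp_def gr_def I4 I4b)

lemma sign_par: "k \<le> M \<Longrightarrow> (-1::real)^(M-k) = (-1)^(M+k)"
proof -
  assume "k \<le> M"
  then have e: "M + k = (M - k) + 2*k" by simp
  have "(-1::real)^(M+k) = (-1)^(M-k) * ((-1)^2)^k" by (subst e, simp only: power_add power_mult)
  then show ?thesis by simp
qed

lemma pH_int: "1 \<le> l \<Longrightarrow> 1 \<le> m \<Longrightarrow>
  (\<Sum>\<gamma> = 1..min (l - 1) m. (-1) ^ (m - \<gamma>) * real ((l - 1) choose \<gamma>) * real ((m - 1) choose (\<gamma> - 1)))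
  = real_of_int (fp (l-1) (m-1))"
proof -
  assume "1 \<le> l" "1 \<le> m"
  then have "l = Suc (l-1)" "m = Suc (m-1)" by auto
  then obtain L M where lm: "l = Suc L" "m = Suc M" by blast
  let ?f = "\<lambda>\<gamma>. (-1::real) ^ (Suc M - \<gamma>) * real (L choose \<gamma>) * real (M choose (\<gamma> - 1))"
  have "(\<Sum>\<gamma> = 1..min L (Suc M). ?f \<gamma>) = (\<Sum>\<gamma> = 1..Suc L. ?f \<gamma>)"
    by (rule sum.mono_neutral_left) (auto simp: binomial_eq_0)
  also have "\<dots> = (\<Sum>k = 0..L. ?f (Suc k))" using sum.shift_bounds_cl_Suc_ivl[of ?f 0 L] by simp
  also have "\<dots> = (\<Sum>k\<le>L. (-1)^(M+k) * real (L choose (k+1)) * real (M choose k))"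
    unfolding atLeast0AtMost
    by (rule sum.cong[OF refl]) (auto simp: sign_par binomial_eq_0 not_le)
  finally show ?thesis using lm by (simp add: fp_def)
qed

lemma qH_int: "1 \<le> l \<Longrightarrow> 1 \<le> m \<Longrightarrow>
  (\<Sum>\<gamma> = 1..min l (m - 1). (-1) ^ (m - \<gamma> - 1) * real ((l - 1) choose (\<gamma> - 1)) * real ((m - 1) choose \<gamma>))
  = real_of_int (fq (l-1) (m-1))"
proof -
  assume "1 \<le> l" "1 \<le> m"
  then have "l = Suc (l-1)" "m = Suc (m-1)" by auto
  then obtain L M where lm: "l = Suc L" "m = Suc M" by blast
  let ?f = "\<lambda>\<gamma>. (-1::real) ^ (Suc M - \<gamma> - 1) * real (L choose (\<gamma> - 1)) * real (M choose \<gamma>)"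
  have "(\<Sum>\<gamma> = 1..min (Suc L) M. ?f \<gamma>) = (\<Sum>\<gamma> = 1..Suc L. ?f \<gamma>)"
    by (rule sum.mono_neutral_left) (auto simp: binomial_eq_0)
  also have "\<dots> = (\<Sum>k = 0..L. ?f (Suc k))" using sum.shift_bounds_cl_Suc_ivl[of ?f 0 L] by simp
  also have "\<dots> = (\<Sum>k\<le>L. (-1)^(M+k+1) * real (L choose k) * real (M choose (k+1)))"
    unfolding atLeast0AtMost
  proof (rule sum.cong[OF refl])
    fix k assume "k \<in> {..L}"
    show "?f (Suc k) = (-1)^(M+k+1) * real (L choose k) * real (M choose (k+1))"
    proof (cases "Suc k \<le> M")
      case True
      then have "(-1::real)^(M - Suc k) = (-1)^(M + Suc k)" by (rule sign_par)
      then show ?thesis by simp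
    qed (simp add: binomial_eq_0)
  qed
  finally show ?thesis using lm by (simp add: fq_def)
qed

lemma pH_g: "n = l + m \<Longrightarrow> pH n l m = (1 / sqrt 2) ^ (n - 1) * real_of_int (gp l m)"
  unfolding pH_def gp_def using pH_int[of l m] by auto

lemma qH_g: "n = l + m \<Longrightarrow> qH n l m = (1 / sqrt 2) ^ (n - 1) * real_of_int (gq l m)"
  unfolding qH_def gq_def using qH_int[of l m] by (auto simp: power_minus' power_divide)


definition XF :: "nat \<Rightarrow> nat \<Rightarrow> nat \<Rightarrow> cmat2" where
  "XF n l m = M2 ((1 / complex_of_real (sqrt 2))^n * of_int (gp l m + gr l m))
                 ((1 / complex_of_real (sqrt 2))^n * of_int (gp l m - gr l m))
                 ((1 / complex_of_real (sqrt 2))^n * of_int (gq l m + gr l m))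
                 ((1 / complex_of_real (sqrt 2))^n * of_int (gr l m - gq l m))"

lemma P0: "matP (\<lambda>_. 0) x = M2 (1 / complex_of_real (sqrt 2)) (1 / complex_of_real (sqrt 2)) 0 0"
  by (simp add: matP_M2)
lemma Q0: "matQ (\<lambda>_. 0) x = M2 0 0 (1 / complex_of_real (sqrt 2)) (- 1 / complex_of_real (sqrt 2))"
  by (simp add: matQ_M2)

lemma M2_cong: "a = a' \<Longrightarrow> b = b' \<Longrightarrow> c = c' \<Longrightarrow> d = d' \<Longrightarrow> M2 a b c d = M2 a' b' c' d'"
  by simp

lemma Xi0_form: "l + m = Suc n \<Longrightarrow> Xi (\<lambda>_. 0) (Suc n) (int l) (int m) = XF (Suc n) l m"
proof (induction n arbitrary: l m)
  case 0
  then have "(l = 1 \<and> m = 0) \<or> (l = 0 \<and> m = 1)" by auto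
  then show ?case
  proof
    assume h: "l = 1 \<and> m = 0"
    then show ?thesis by (simp add: XF_def gp_def gq_def gr_def P0 Q0 M2_one M2_zero M2_mult M2_add)
  next
    assume h: "l = 0 \<and> m = 1"
    then show ?thesis by (simp add: XF_def gp_def gq_def gr_def P0 Q0 M2_one M2_zero M2_mult M2_add)
  qed
next
  case (Suc n)
  let ?s = "1 / complex_of_real (sqrt 2)"
  have rec: "Xi (\<lambda>_. 0) (Suc (Suc n)) (int l) (int m) =
     matP (\<lambda>_. 0) 0 ** Xi (\<lambda>_. 0) (Suc n) (int l - 1) (int m)
     + matQ (\<lambda>_. 0) 0 ** Xi (\<lambda>_. 0) (Suc n) (int l) (int m - 1)"
    by (simp add: P0 Q0)
  show ?case
  proof (cases "l = 0")
    case True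
    then have m: "m = Suc (Suc n)" using Suc.prems by simp
    have "Xi (\<lambda>_. 0) (Suc n) (int l) (int m - 1) = XF (Suc n) 0 (Suc n)"
      using Suc.IH[of 0 "Suc n"] True m by simp
    then show ?thesis unfolding rec using True m
      by (simp add: Xi_neg XF_def gp_def gq_def gr_def P0 Q0 M2_zero M2_mult M2_add algebra_simps)
  next
    case l1: False
    show ?thesis
    proof (cases "m = 0")
      case True
      then have l: "l = Suc (Suc n)" using Suc.prems by simp
      have "Xi (\<lambda>_. 0) (Suc n) (int l - 1) (int m) = XF (Suc n) (Suc n) 0"
        using Suc.IH[of "Suc n" 0] True l by simp
      then show ?thesis unfolding rec using True l
        by (simp add: Xi_neg XF_def gp_def gq_def gr_def P0 Q0 M2_zero M2_mult M2_add algebra_simps)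
    next
      case m1: False
      have a: "Xi (\<lambda>_. 0) (Suc n) (int l - 1) (int m) = XF (Suc n) (l-1) m"
        using Suc.IH[of "l-1" m] Suc.prems l1 by (simp add: of_nat_diff)
      have b: "Xi (\<lambda>_. 0) (Suc n) (int l) (int m - 1) = XF (Suc n) l (m-1)"
        using Suc.IH[of l "m-1"] Suc.prems m1 by (simp add: of_nat_diff)
      have L1: "1 \<le> l" "1 \<le> m" using l1 m1 by auto
      have eA: "gp l m + gr l m = (gp (l-1) m + gr (l-1) m) + (gq (l-1) m + gr (l-1) m)"
        using G1[OF L1] G3[OF L1] by simp
      have eB: "gp l m - gr l m = (gp (l-1) m - gr (l-1) m) + (gr (l-1) m - gq (l-1) m)"
        using G1[OF L1] G3[OF L1] by simp
      have eC: "gq l m + gr l m = (gp l (m-1) + gr l (m-1)) - (gq l (m-1) + gr l (m-1))"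
        using G2[OF L1] G4[OF L1] by simp
      have eD: "gr l m - gq l m = (gp l (m-1) - gr l (m-1)) - (gr l (m-1) - gq l (m-1))"
        using G2[OF L1] G4[OF L1] by simp
      show ?thesis unfolding rec a b
        unfolding XF_def eA eB eC eD
        apply (simp only: P0 Q0 M2_mult M2_add)
        apply (rule M2_cong)
        apply (simp only: of_int_add of_int_diff power_Suc; algebra)+
        done
    qed
  qed
qed


lemma cmod_lemma: "(cmod (complex_of_real a * cis th + complex_of_real b * \<i>))^2 = a^2 + b^2 + 2*a*b* sin th"
proof -
  have "(cmod (complex_of_real a * cis th + complex_of_real b * \<i>))^2 = (a * cos th)^2 + (a * sin th + b)^2"
    by (simp add: cmod_power2)
  also have "\<dots> = a^2 * ((cos th)^2 + (sin th)^2) + b^2 + 2*a*b* sin th" by algebra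
  finally show ?thesis by simp
qed

lemma vec2_1: "(\<chi> i. if i = 1 then X else Y)$(1::2) = X" by simp
lemma vec2_2: "(\<chi> i. if i = 1 then X else Y)$(2::2) = Y" by simp

lemma s2cc: "complex_of_real (sqrt 2) * complex_of_real (sqrt 2) = 2"
  by (simp flip: of_real_mult)

lemma dd: "(z::complex) / complex_of_real (sqrt 2) / complex_of_real (sqrt 2) = z / 2"
proof -
  have "complex_of_real (sqrt 2) * complex_of_real (sqrt 2) = 2"
    by (simp flip: of_real_mult)
  then show ?thesis by (simp add: divide_divide_eq_left)
qed

lemma norm_D1: "(norm (D1 \<omega> x *v w))^2 = (norm w)^2"
  unfolding D1_def M2_mulv norm2_vec2 by (simp add: norm_mult)

lemma XF_real: "XF n l m = M2 (complex_of_real ((1/sqrt 2)^n * real_of_int (gp l m + gr l m)))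
                 (complex_of_real ((1/sqrt 2)^n * real_of_int (gp l m - gr l m)))
                 (complex_of_real ((1/sqrt 2)^n * real_of_int (gq l m + gr l m)))
                 (complex_of_real ((1/sqrt 2)^n * real_of_int (gr l m - gq l m)))"
  unfolding XF_def by (simp add: of_real_power)

lemma main_form:
  assumes "l + m = Suc k"
  shows "(norm (Xi \<omega> (Suc k) (int l) (int m) *v phi0))^2 =
     (1/2)^(Suc k) / 2 * ((real_of_int (gp l m + gr l m))^2 + (real_of_int (gp l m - gr l m))^2
       + (real_of_int (gq l m + gr l m))^2 + (real_of_int (gr l m - gq l m))^2
       + 2 * (real_of_int (gp l m + gr l m) * real_of_int (gp l m - gr l m)
            + real_of_int (gq l m + gr l m) * real_of_int (gr l m - gq l m)) * sin (\<omega> 0))"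
proof -
  define r where "r = (1/sqrt 2)^(Suc k)"
  define A where "A = real_of_int (gp l m + gr l m)"
  define B where "B = real_of_int (gp l m - gr l m)"
  define C where "C = real_of_int (gq l m + gr l m)"
  define D where "D = real_of_int (gr l m - gq l m)"
  have r2: "r^2 = (1/2)^(Suc k)"
  proof -
    have "r^2 = ((1/sqrt 2)^2)^(Suc k)" unfolding r_def by (metis power_mult mult.commute)
    also have "(1/sqrt 2)^2 = 1/2" by (simp add: power_divide)
    finally show ?thesis .
  qed
  have X: "Xi \<omega> (Suc k) (int l) (int m) = D1 \<omega> (- int l + int m) ** XF (Suc k) l m ** D2 \<omega>"
    using gauge[of \<omega> "Suc k" "int l" "int m"] Xi0_form[OF assms] by simp
  have "(norm (Xi \<omega> (Suc k) (int l) (int m) *v phi0))^2 = (norm (XF (Suc k) l m *v (D2 \<omega> *v phi0)))^2"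
    unfolding X by (simp add: matrix_vector_mul_assoc[symmetric] norm_D1)
  also have "XF (Suc k) l m *v (D2 \<omega> *v phi0) = (\<chi> i. if i = 1
       then complex_of_real (r*A/sqrt 2) * cis (\<omega> 0) + complex_of_real (r*B/sqrt 2) * \<i>
       else complex_of_real (r*C/sqrt 2) * cis (\<omega> 0) + complex_of_real (r*D/sqrt 2) * \<i>)"
    unfolding XF_real D2_def M2_mulv phi0_def r_def A_def B_def C_def D_def
    by (simp add: vec_eq_iff forall_2 algebra_simps add_divide_distrib diff_divide_distrib divide_divide_eq_left s2cc)
  also have "(norm \<dots>)^2 = (r*A/sqrt 2)^2 + (r*B/sqrt 2)^2 + 2*(r*A/sqrt 2)*(r*B/sqrt 2)* sin (\<omega> 0)
      + ((r*C/sqrt 2)^2 + (r*D/sqrt 2)^2 + 2*(r*C/sqrt 2)*(r*D/sqrt 2)* sin (\<omega> 0))"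
    unfolding norm2_vec2 vec2_1 vec2_2 cmod_lemma by simp
  also have "\<dots> = r^2 / 2 * (A^2 + B^2 + C^2 + D^2 + 2*(A*B + C*D)* sin (\<omega> 0))"
    by (simp add: power_mult_distrib power_divide algebra_simps power2_eq_square)
  finally show ?thesis unfolding r2 A_def B_def C_def D_def .
qed


lemma s2k: "sqrt 2 ^ (k*2) = (2::real)^k"
proof -
  have "sqrt 2 ^ (k*2) = (sqrt 2 ^ 2)^k" by (metis power_mult mult.commute)
  then show ?thesis by simp
qed

theorem proposition2:
  fixes \<omega> :: "int \<Rightarrow> real" and l m n :: nat and x :: int
  assumes "n = l + m" and "x = - int l + int m"
  shows "qprob \<omega> n x = qprob (\<lambda>_. 0) n x
           + 1 / 2 * ((pH n l m)^2 - (qH n l m)^2) * sin (\<omega> 0)"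
proof (cases n)
  case 0
  then have "l = 0" "m = 0" "x = 0" using assms by auto
  then show ?thesis using 0 by (simp add: qprob_def pH_def qH_def)
next
  case (Suc k)
  have ev: "even (int n + x)" using assms by simp
  have d1: "(int n - x) div 2 = int l" using assms by simp
  have d2: "(int n + x) div 2 = int m" using assms by simp
  have q: "qprob w n x = (norm (Xi w (Suc k) (int l) (int m) *v phi0))^2" for w
    unfolding qprob_def using ev d1 d2 Suc by simp
  have lm: "l + m = Suc k" using assms Suc by simp
  define A where "A = real_of_int (gp l m + gr l m)"
  define B where "B = real_of_int (gp l m - gr l m)"
  define C where "C = real_of_int (gq l m + gr l m)"
  define D where "D = real_of_int (gr l m - gq l m)"
  have f1: "qprob \<omega> n x = (1/2)^(Suc k) / 2 * (A^2 + B^2 + C^2 + D^2 + 2 * (A*B + C*D) * sin (\<omega> 0))"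
    unfolding q main_form[OF lm] A_def B_def C_def D_def ..
  have f0: "qprob (\<lambda>_. 0) n x = (1/2)^(Suc k) / 2 * (A^2 + B^2 + C^2 + D^2)"
    unfolding q main_form[OF lm] A_def B_def C_def D_def by simp
  have AB: "A*B + C*D = (real_of_int (gp l m))^2 - (real_of_int (gq l m))^2"
    unfolding A_def B_def C_def D_def by (simp add: algebra_simps power2_eq_square)
  have p: "(pH n l m)^2 = (1/2)^k * (real_of_int (gp l m))^2"
    using pH_g[OF assms(1)] Suc by (simp add: power_mult_distrib power_divide s2k flip: power_mult)
  have qq: "(qH n l m)^2 = (1/2)^k * (real_of_int (gq l m))^2"
    using qH_g[OF assms(1)] Suc by (simp add: power_mult_distrib power_divide s2k flip: power_mult)
  have e: "(1/2)^k * (real_of_int (gp l m))^2 - (1/2)^k * (real_of_int (gq l m))^2 = (1/2)^k * (A*B+C*D)"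
    by (simp add: AB right_diff_distrib)
  show ?thesis unfolding f1 f0 p qq e by (simp add: algebra_simps)
qed

end
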